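(* Let $K\ge2$, $p\in(0,1)$, and let $\sigma:[K]\to[K]$ be a bijection different from the identity. Then there exists $m\in[K-1]$ such that $d_S(\sigma)\ge d_S(\hat\sigma_m)$ for all $S\in\mathcal S$.
   Context: Items are $[K]=\{1,\dots,K\}$, $\mathcal S=\{S\subseteq[K]:|S|\ge2\}$. A ranking is a bijection $\sigma:[K]\to[K]$, $\sigma(i)=k$ meaning item $i$ is in position $k$. For $S\in\mathcal S$, $i\in S$, let $\sigma(i\mid S)=1+|\{j\in S:\sigma(j)<\sigma(i)\}|$ and $f^{\mathrm{OA}}_\sigma(i\mid S)=\frac{1-p}{1-p^{|S|}}p^{\sigma(i\mid S)-1}$. Define $d_S(\sigma)=\sum_{i\in S}f^{\mathrm{OA}}_{\mathrm{id}}(i\mid S)\log\frac{f^{\mathrm{OA}}_{\mathrm{id}}(i\mid S)}{f^{\mathrm{OA}}_\sigma(i\mid S)}$, with $\mathrm{id}$ the identity ranking. For $m\in[K-1]$, $\hat\sigma_m$ is the ranking obtained from the identity by swapping the positions of items $m$ and $m+1$: $\hat\sigma_m(m)=m+1$, $\hat\sigma_m(m+1)=m$, $\hat\sigma_m(j)=j$ otherwise. *)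

theory Defs
  imports Complex_Main
begin

text \<open>Items are {1..K}; a ranking is a bijection sigma of {1..K} onto itself,
  sigma i = k meaning item i is in position k.\<close>

definition is_ranking :: "nat \<Rightarrow> (nat \<Rightarrow> nat) \<Rightarrow> bool" where
  "is_ranking K \<sigma> \<longleftrightarrow> bij_betw \<sigma> {1..K} {1..K}"

definition admissible_sets :: "nat \<Rightarrow> nat set set" where
  "admissible_sets K = {S. S \<subseteq> {1..K} \<and> card S \<ge> 2}"

definition rel_pos :: "(nat \<Rightarrow> nat) \<Rightarrow> nat \<Rightarrow> nat set \<Rightarrow> nat" where
  "rel_pos \<sigma> i S = 1 + card {j \<in> S. \<sigma> j < \<sigma> i}"

definition f_OA :: "real \<Rightarrow> (nat \<Rightarrow> nat) \<Rightarrow> nat \<Rightarrow> nat set \<Rightarrow> real" where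
  "f_OA p \<sigma> i S = (1 - p) / (1 - p ^ card S) * p ^ (rel_pos \<sigma> i S - 1)"

definition d_S :: "real \<Rightarrow> nat set \<Rightarrow> (nat \<Rightarrow> nat) \<Rightarrow> real" where
  "d_S p S \<sigma> = (\<Sum>i\<in>S. f_OA p id i S * ln (f_OA p id i S / f_OA p \<sigma> i S))"

definition adj_swap :: "nat \<Rightarrow> nat \<Rightarrow> nat" where
  "adj_swap m = (\<lambda>j. if j = m then m + 1 else if j = m + 1 then m else j)"

end

theory Submission
  imports Defs
begin

definition qq :: "real \<Rightarrow> nat set \<Rightarrow> nat \<Rightarrow> real" where
  "qq p S i = p ^ card {j\<in>S. j < i}"

definition GG :: "real \<Rightarrow> nat set \<Rightarrow> (nat \<Rightarrow> nat) \<Rightarrow> real" where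
  "GG p S \<tau> = (\<Sum>i\<in>S. \<Sum>j\<in>S. (if i < j \<and> \<tau> j < \<tau> i then qq p S i - qq p S j else 0))"

lemma card_as_sum:
  assumes "finite S"
  shows "real (card {j\<in>S. P j}) = (\<Sum>j\<in>S. if P j then 1 else 0)"
proof -
  have "real (card {j\<in>S. P j}) = (\<Sum>j\<in>{j\<in>S. P j}. 1)" by simp
  also have "\<dots> = (\<Sum>j\<in>S. if P j then 1 else 0)"
    using assms by (simp add: sum.inter_filter[symmetric])
  finally show ?thesis .
qed

lemma pair_sum:
  fixes h :: "nat \<Rightarrow> nat \<Rightarrow> real"
  assumes "\<And>i. h i i = 0"
  shows "(\<Sum>i\<in>S. \<Sum>j\<in>S. h i j) = (\<Sum>i\<in>S. \<Sum>j\<in>S. if i < j then h i j + h j i else 0)"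
proof -
  have e: "h i j = (if i < j then h i j else 0) + (if j < i then h i j else 0)" for i j
    using assms[of i] by (cases i j rule: linorder_cases) auto
  have "(\<Sum>i\<in>S. \<Sum>j\<in>S. h i j) = (\<Sum>i\<in>S. \<Sum>j\<in>S. if i < j then h i j else 0)
        + (\<Sum>i\<in>S. \<Sum>j\<in>S. if j < i then h i j else 0)"
    by (subst e) (simp add: sum.distrib)
  also have "(\<Sum>i\<in>S. \<Sum>j\<in>S. if j < i then h i j else 0) = (\<Sum>j\<in>S. \<Sum>i\<in>S. if j < i then h i j else 0)"
    by (rule sum.swap)
  also have "(\<Sum>i\<in>S. \<Sum>j\<in>S. if i < j then h i j else 0) + (\<Sum>j\<in>S. \<Sum>i\<in>S. if j < i then h i j else 0)
     = (\<Sum>i\<in>S. \<Sum>j\<in>S. if i < j then h i j + h j i else 0)"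
    by (simp add: sum.distrib[symmetric]) (intro sum.cong refl, auto)
  finally show ?thesis .
qed

lemma d_eq:
  assumes fin: "finite S" and ne: "S \<noteq> {}" and p0: "0 < p" and p1: "p < 1" and inj: "inj_on \<tau> S"
  shows "d_S p S \<tau> = ((1 - p) / (1 - p ^ card S) * (- ln p)) * GG p S \<tau>"
proof -
  define c where "c = (1 - p) / (1 - p ^ card S)"
  have cS: "card S > 0" using fin ne by (simp add: card_gt_0_iff)
  have "p ^ card S < 1" using p0 p1 cS by (simp add: power_less_one_iff)
  then have c0: "c > 0" unfolding c_def using p1 by simp
  define a where "a i = card {j\<in>S. j < i}" for i
  define b where "b i = card {j\<in>S. \<tau> j < \<tau> i}" for i
  have fid: "f_OA p id i S = c * p ^ a i" for i
    by (simp add: f_OA_def rel_pos_def c_def a_def)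
  have ft: "f_OA p \<tau> i S = c * p ^ b i" for i
    by (simp add: f_OA_def rel_pos_def c_def b_def)
  have lnq: "ln (c * p ^ a i / (c * p ^ b i)) = (real (a i) - real (b i)) * ln p" for i
  proof -
    have "c * p ^ a i / (c * p ^ b i) = p ^ a i / p ^ b i" using c0 by simp
    then show ?thesis using p0 by (simp add: ln_div ln_realpow left_diff_distrib)
  qed
  have "d_S p S \<tau> = (\<Sum>i\<in>S. c * p ^ a i * ((real (a i) - real (b i)) * ln p))"
    unfolding d_S_def fid ft lnq ..
  also have "\<dots> = (c * (- ln p)) * (\<Sum>i\<in>S. qq p S i * (real (b i) - real (a i)))"
    by (simp add: sum_distrib_left qq_def a_def algebra_simps)
  also have "(\<Sum>i\<in>S. qq p S i * (real (b i) - real (a i)))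
     = (\<Sum>i\<in>S. \<Sum>j\<in>S. qq p S i * ((if \<tau> j < \<tau> i then 1 else 0) - (if j < i then 1 else 0)))"
    unfolding a_def b_def card_as_sum[OF fin]
    by (simp add: sum_distrib_left sum_subtractf right_diff_distrib)
  also have "\<dots> = (\<Sum>i\<in>S. \<Sum>j\<in>S. if i < j then
       qq p S i * ((if \<tau> j < \<tau> i then 1 else 0) - (if j < i then 1 else 0))
     + qq p S j * ((if \<tau> i < \<tau> j then 1 else 0) - (if i < j then 1 else 0)) else 0)"
    by (rule pair_sum) simp
  also have "\<dots> = GG p S \<tau>"
    unfolding GG_def
  proof (intro sum.cong refl)
    fix i j assume i: "i \<in> S" and j: "j \<in> S"
    show "(if i < j then
       qq p S i * ((if \<tau> j < \<tau> i then 1 else 0) - (if j < i then 1 else 0))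
     + qq p S j * ((if \<tau> i < \<tau> j then 1 else 0) - (if i < j then 1 else 0)) else 0)
      = (if i < j \<and> \<tau> j < \<tau> i then qq p S i - qq p S j else 0)"
    proof (cases "i < j")
      case True
      then have "\<tau> i \<noteq> \<tau> j" using inj i j by (metis inj_on_eq_iff less_irrefl)
      then show ?thesis using True by (cases "\<tau> j < \<tau> i") auto
    qed simp
  qed
  finally show ?thesis unfolding c_def by simp
qed

lemma qq_mono:
  assumes "finite S" "0 < p" "p < 1" "i < j"
  shows "qq p S j \<le> qq p S i"
proof -
  have "card {k\<in>S. k < i} \<le> card {k\<in>S. k < j}"
    using assms by (intro card_mono) auto
  then show ?thesis unfolding qq_def using assms by (intro power_decreasing) auto
qed

lemma adj_inv:
  assumes "i < j" "adj_swap m j < adj_swap m i"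
  shows "i = m \<and> j = m + 1"
  using assms by (auto simp: adj_swap_def split: if_splits)

lemma inj_adj: "inj (adj_swap m)"
  by (auto simp: inj_def adj_swap_def split: if_splits)

lemma exists_desc:
  fixes \<sigma> :: "nat \<Rightarrow> nat" and K :: nat
  assumes bij: "bij_betw \<sigma> {1..K} {1..K}" and ex: "\<exists>i\<in>{1..K}. \<sigma> i \<noteq> i"
  shows "\<exists>m\<in>{1..K-1}. \<sigma> (m+1) < \<sigma> m"
proof (rule ccontr)
  assume nt: "\<not> ?thesis"
  have nd: "\<not> \<sigma> (m+1) < \<sigma> m" if "1 \<le> m" "m < K" for m
  proof -
    have "m \<le> K - 1" using that(2) by arith
    then have "m \<in> {1..K-1}" using that(1) by simp
    then show ?thesis using nt by blast
  qed
  have inj: "inj_on \<sigma> {1..K}" using bij bij_betw_def by blast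
  have rng: "\<And>i. i \<in> {1..K} \<Longrightarrow> \<sigma> i \<in> {1..K}" using bij bij_betwE by blast
  have inc: "\<sigma> m < \<sigma> (m+1)" if "1 \<le> m" "m < K" for m
  proof -
    have "\<sigma> m \<noteq> \<sigma> (m+1)" 
    proof
      assume "\<sigma> m = \<sigma> (m+1)"
      moreover have "m \<in> {1..K}" "m+1 \<in> {1..K}" using that by auto
      ultimately have "m = m + 1" using inj inj_on_eq_iff by metis
      then show False by simp
    qed
    then show ?thesis using nd[OF that] by simp
  qed
  have lo: "1 \<le> i \<longrightarrow> i \<le> K \<longrightarrow> i \<le> \<sigma> i" for i
  proof (induction i)
    case 0 then show ?case by simp
  next
    case (Suc n)
    show ?case
    proof (intro impI)
      assume a: "1 \<le> Suc n" "Suc n \<le> K"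
      show "Suc n \<le> \<sigma> (Suc n)"
      proof (cases "n = 0")
        case True then show ?thesis using rng[of 1] a by auto
      next
        case False
        then have "n \<le> \<sigma> n" using Suc a by auto
        moreover have "\<sigma> n < \<sigma> (n+1)" using inc[of n] False a by auto
        ultimately show ?thesis by simp
      qed
    qed
  qed
  have hi: "\<forall>i. 1 \<le> i \<longrightarrow> i \<le> K \<longrightarrow> K - i = d \<longrightarrow> \<sigma> i \<le> i" for d
  proof (induction d)
    case 0 then show ?case using rng by fastforce
  next
    case (Suc d)
    show ?case
    proof (intro allI impI)
      fix i assume a: "1 \<le> i" "i \<le> K" "K - i = Suc d"
      then have "\<sigma> (i+1) \<le> i+1" using Suc by auto
      moreover have "\<sigma> i < \<sigma> (i+1)" using inc[of i] a by auto
      ultimately show "\<sigma> i \<le> i" by simp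
    qed
  qed
  from ex obtain i where i: "i \<in> {1..K}" "\<sigma> i \<noteq> i" by blast
  have "i \<le> \<sigma> i" using lo[of i] i(1) by simp
  moreover have "\<sigma> i \<le> i" using hi[of "K - i"] i(1) by simp
  ultimately show False using i(2) by simp
qed

theorem mainTheorem10:
  fixes K :: nat and p :: real and \<sigma> :: "nat \<Rightarrow> nat"
  assumes "K \<ge> 2" and "0 < p" and "p < 1"
    and "is_ranking K \<sigma>"
    and "\<exists>i\<in>{1..K}. \<sigma> i \<noteq> i"
  shows "\<exists>m\<in>{1..K-1}. \<forall>S\<in>admissible_sets K. d_S p S \<sigma> \<ge> d_S p S (adj_swap m)"
proof -
  have bij: "bij_betw \<sigma> {1..K} {1..K}" using assms(4) is_ranking_def by blast
  obtain m where m: "m \<in> {1..K-1}" and desc: "\<sigma> (m+1) < \<sigma> m"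
    using exists_desc[OF bij assms(5)] by blast
  have "\<forall>S\<in>admissible_sets K. d_S p S \<sigma> \<ge> d_S p S (adj_swap m)"
  proof
    fix S assume "S \<in> admissible_sets K"
    then have sub: "S \<subseteq> {1..K}" and c2: "card S \<ge> 2" by (auto simp: admissible_sets_def)
    have fin: "finite S" using sub finite_subset by blast
    have ne: "S \<noteq> {}"
    proof
      assume "S = {}" then show False using c2 by simp
    qed
    have injs: "inj_on \<sigma> S" using inj_on_subset[OF bij_betw_imp_inj_on[OF bij] sub] .
    have inja: "inj_on (adj_swap m) S" using inj_on_subset[OF inj_adj subset_UNIV] .
    define C where "C = (1 - p) / (1 - p ^ card S) * (- ln p)"
    have "p ^ card S < 1" using assms(2,3) c2 by (simp add: power_less_one_iff)
    then have C0: "C \<ge> 0" unfolding C_def using assms(2,3)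
      by (intro mult_nonneg_nonneg) auto
    have "GG p S (adj_swap m) \<le> GG p S \<sigma>"
      unfolding GG_def
    proof (intro sum_mono)
      fix i j assume "i \<in> S" "j \<in> S"
      show "(if i < j \<and> adj_swap m j < adj_swap m i then qq p S i - qq p S j else 0)
         \<le> (if i < j \<and> \<sigma> j < \<sigma> i then qq p S i - qq p S j else 0)"
      proof (cases "i < j \<and> adj_swap m j < adj_swap m i")
        case True
        then have "i = m \<and> j = m + 1" using adj_inv by blast
        then show ?thesis using True desc by simp
      next
        case False
        then show ?thesis using qq_mono[OF fin assms(2,3), of i j] by auto
      qed
    qed
    then show "d_S p S \<sigma> \<ge> d_S p S (adj_swap m)"
      using d_eq[OF fin ne assms(2,3) injs] d_eq[OF fin ne assms(2,3) inja] C0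
      unfolding C_def[symmetric] by (simp add: mult_left_mono)
  qed
  then show ?thesis using m by blast
qed

end
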